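(* Let $u\in\mathcal{L}PSH(\mathbb{C}^n)$ with $\sigma_u>n$. Then every polynomial $P\in\mathcal{P}_\infty(u)$ has degree at most $\sigma_u-n$. Furthermore, if $\mathcal{L}_\infty(u)>n$ and $c_\zeta(u)>1$ for all $\zeta\in\mathbb{C}^n$, then every polynomial of degree smaller than $\mathcal{L}_\infty(u)-n$ belongs to $\mathcal{P}_\infty(u)$.
   Context: $\mathcal{L}PSH(\mathbb{C}^n)$: plurisubharmonic $u$ on $\mathbb{C}^n$ with finite $\sigma_u=\limsup_{|z|\to\infty}u(z)/\log|z|$. $\mathcal{L}_\infty(u)=\liminf_{|z|\to\infty}u(z)/\log|z|$. $\mathcal{P}_\infty(u)$ is the set of polynomials $P:\mathbb{C}^n\to\mathbb{C}$ such that $\int_{\mathbb{C}^n\setminus K}|P|^2e^{-2u}d\lambda<\infty$ for some compact $K$. $c_\zeta(u)=\sup\{c>0: e^{-cu}\text{ is square integrable on some neighborhood of }\zeta\}$. *)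

theory Defs
  imports "HOL-Analysis.Analysis"
begin

text \<open>C^n is modelled as the type complex ^ 'n (n = CARD('n)); Lebesgue measure on C^n = R^2n
  is lborel on this Euclidean space. Plurisubharmonic functions take values in [-\<infinity>, \<infinity>).\<close>

definition ereal_integral :: "'a measure \<Rightarrow> ('a \<Rightarrow> ereal) \<Rightarrow> ereal" where
  "ereal_integral M f =
     enn2ereal (\<integral>\<^sup>+ x. e2ennreal (f x) \<partial>M) - enn2ereal (\<integral>\<^sup>+ x. e2ennreal (- f x) \<partial>M)"

definition circle_mean :: "(complex \<Rightarrow> ereal) \<Rightarrow> ereal" where
  "circle_mean f = ereal_integral (restrict_space lborel {0..2*pi}) (\<lambda>t. f (cis t)) / ereal (2*pi)"

text \<open>Plurisubharmonic on all of C^n: values in [-\<infinity>,\<infinity>), not identically -\<infinity>,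
  upper semicontinuous, and subharmonic (sub-mean-value property) on every complex line.\<close>
definition psh :: "(complex^'n \<Rightarrow> ereal) \<Rightarrow> bool" where
  "psh u \<longleftrightarrow> (\<forall>z. u z \<noteq> \<infinity>) \<and> (\<exists>z. u z \<noteq> -\<infinity>) \<and>
     (\<forall>c::ereal. open {z. u z < c}) \<and>
     (\<forall>a b. u a \<le> circle_mean (\<lambda>w. u (a + w *s b)))"

definition sigma_inf :: "(complex^'n \<Rightarrow> ereal) \<Rightarrow> ereal" where
  "sigma_inf u = Limsup at_infinity (\<lambda>z. u z / ereal (ln (norm z)))"

definition L_inf :: "(complex^'n \<Rightarrow> ereal) \<Rightarrow> ereal" where
  "L_inf u = Liminf at_infinity (\<lambda>z. u z / ereal (ln (norm z)))"

definition LPSH :: "(complex^'n \<Rightarrow> ereal) \<Rightarrow> bool" where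
  "LPSH u \<longleftrightarrow> psh u \<and> \<bar>sigma_inf u\<bar> \<noteq> \<infinity>"

definition exp_weight :: "real \<Rightarrow> ('a \<Rightarrow> ereal) \<Rightarrow> 'a \<Rightarrow> ennreal" where
  "exp_weight t u z = (if u z = -\<infinity> then \<infinity> else ennreal (exp (- t * real_of_ereal (u z))))"

text \<open>Polynomials on C^n: given by a finitely supported coefficient function on multi-indices.\<close>
definition mpoly_fun :: "(('n::finite \<Rightarrow> nat) \<Rightarrow> complex) \<Rightarrow> complex^'n \<Rightarrow> complex" where
  "mpoly_fun c z = (\<Sum>\<alpha>\<in>{\<alpha>. c \<alpha> \<noteq> 0}. c \<alpha> * (\<Prod>i\<in>UNIV. (z $ i) ^ \<alpha> i))"

text \<open>Total degree (the zero polynomial gets degree 0).\<close>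
definition total_degree :: "(('n::finite \<Rightarrow> nat) \<Rightarrow> complex) \<Rightarrow> nat" where
  "total_degree c = Max ({sum \<alpha> UNIV | \<alpha>. c \<alpha> \<noteq> 0} \<union> {0})"

definition P_inf :: "(complex^'n \<Rightarrow> ereal) \<Rightarrow> (complex^'n \<Rightarrow> complex) set" where
  "P_inf u = {P. (\<exists>c. finite {\<alpha>. c \<alpha> \<noteq> 0} \<and> P = mpoly_fun c) \<and>
     (\<exists>K. compact K \<and>
        (\<integral>\<^sup>+ z\<in>(UNIV - K). ennreal ((norm (P z))\<^sup>2) * exp_weight 2 u z \<partial>lborel) < \<infinity>)}"

definition lct :: "(complex^'n \<Rightarrow> ereal) \<Rightarrow> complex^'n \<Rightarrow> ereal" where
  "lct u \<zeta> = Sup {ereal c | c. c > 0 \<and>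
     (\<exists>U. open U \<and> \<zeta> \<in> U \<and> (\<integral>\<^sup>+ z\<in>U. exp_weight (2*c) u z \<partial>lborel) < \<infinity>)}"

end

theory Submission
  imports Defs
begin


lemma univ_poly_zero:
  fixes a :: "nat \<Rightarrow> complex"
  assumes "finite K" "\<forall>t. (\<Sum>k\<in>K. a k * t ^ k) = 0"
  shows "\<forall>k\<in>K. a k = 0"
proof -
  define b where "b k = (if k \<in> K then a k else 0)" for k
  have "\<forall>t. (\<Sum>k\<le>Max (insert 0 K). b k * t ^ k) = 0"
  proof
    fix t :: complex
    have "(\<Sum>k\<le>Max (insert 0 K). b k * t ^ k) = (\<Sum>k\<in>K. b k * t ^ k)"
      by (rule sum.mono_neutral_right) (auto simp: b_def assms(1))
    also have "\<dots> = (\<Sum>k\<in>K. a k * t ^ k)" by (simp add: b_def)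
    finally show "(\<Sum>k\<le>Max (insert 0 K). b k * t ^ k) = 0" using assms(2) by simp
  qed
  then have "\<forall>i\<le>Max (insert 0 K). b i = 0" using polyfun_eq_0 by blast
  moreover have "k \<le> Max (insert 0 K)" if "k \<in> K" for k using that assms(1) by simp
  ultimately show ?thesis by (metis b_def)
qed

lemma poly_fiber_zero:
  fixes c :: "('n::finite \<Rightarrow> nat) \<Rightarrow> complex"
  assumes "finite S" "finite A"
    "\<forall>z::complex^'n. (\<Sum>\<alpha>\<in>A. c \<alpha> * (\<Prod>i\<in>S. (z$i)^\<alpha> i)) = 0"
  shows "(\<Sum>\<alpha>\<in>{\<alpha>\<in>A. \<forall>i\<in>S. \<alpha> i = \<beta> i}. c \<alpha>) = 0"
  using assms
proof (induction S arbitrary: A \<beta> rule: finite_induct)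
  case empty
  then show ?case by simp
next
  case (insert j S)
  define Q where "Q k z = (\<Sum>\<alpha>\<in>{\<alpha>\<in>A. \<alpha> j = k}. c \<alpha> * (\<Prod>i\<in>S. ((z::complex^'n)$i)^\<alpha> i))" for k z
  have QA: "\<forall>z. Q k z = 0" for k
  proof
    fix z :: "complex^'n"
    have eq: "(\<Sum>\<alpha>\<in>A. c \<alpha> * (\<Prod>i\<in>insert j S. (w$i)^\<alpha> i)) = (\<Sum>k\<in>(\<lambda>\<alpha>. \<alpha> j) ` A. Q k w * (w$j)^k)" for w :: "complex^'n"
    proof -
      have "(\<Sum>\<alpha>\<in>A. c \<alpha> * (\<Prod>i\<in>insert j S. (w$i)^\<alpha> i)) =
          (\<Sum>k\<in>(\<lambda>\<alpha>. \<alpha> j) ` A. \<Sum>\<alpha>\<in>{\<alpha>\<in>A. \<alpha> j = k}. c \<alpha> * (\<Prod>i\<in>insert j S. (w$i)^\<alpha> i))"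
        by (rule sum.image_gen[OF insert.prems(1)])
      also have "\<dots> = (\<Sum>k\<in>(\<lambda>\<alpha>. \<alpha> j) ` A. Q k w * (w$j)^k)"
        unfolding Q_def sum_distrib_right
        by (intro sum.cong refl) (auto simp: insert.hyps mult_ac)
      finally show ?thesis .
    qed
    have "\<forall>t. (\<Sum>k\<in>(\<lambda>\<alpha>. \<alpha> j) ` A. Q k z * t^k) = 0"
    proof
      fix t
      define w where "w = (\<chi> i. if i = j then t else z$i)"
      have "Q k w = Q k z" for k unfolding Q_def w_def using insert.hyps by (auto intro!: sum.cong prod.cong)
      moreover have "w $ j = t" by (simp add: w_def)
      ultimately show "(\<Sum>k\<in>(\<lambda>\<alpha>. \<alpha> j) ` A. Q k z * t^k) = 0"
        using insert.prems(2) eq[of w] by simp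
    qed
    then have "\<forall>k\<in>(\<lambda>\<alpha>. \<alpha> j) ` A. Q k z = 0"
      by (intro univ_poly_zero) (use insert.prems(1) in auto)
    show "Q k z = 0"
    proof (cases "k \<in> (\<lambda>\<alpha>. \<alpha> j) ` A")
      case True
      then show ?thesis using \<open>\<forall>k\<in>(\<lambda>\<alpha>. \<alpha> j) ` A. Q k z = 0\<close> by blast
    next
      case False
      then have e: "{\<alpha>\<in>A. \<alpha> j = k} = {}" by auto
      show ?thesis unfolding Q_def by (simp only: e sum.empty)
    qed
  qed
  have "(\<Sum>\<alpha>\<in>{\<alpha>\<in>{\<alpha>\<in>A. \<alpha> j = \<beta> j}. \<forall>i\<in>S. \<alpha> i = \<beta> i}. c \<alpha>) = 0"
    by (rule insert.IH) (use insert.prems(1) QA in \<open>auto simp: Q_def\<close>)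
  moreover have "{\<alpha>\<in>{\<alpha>\<in>A. \<alpha> j = \<beta> j}. \<forall>i\<in>S. \<alpha> i = \<beta> i} = {\<alpha>\<in>A. \<forall>i\<in>insert j S. \<alpha> i = \<beta> i}"
    by auto
  ultimately show ?case by simp
qed



lemma mono_norm_le:
  fixes z :: "complex^'n"
  assumes "1 \<le> norm z" "sum \<alpha> UNIV \<le> e"
  shows "norm (\<Prod>i\<in>UNIV. (z$i)^\<alpha> i) \<le> norm z ^ e"
proof -
  have "norm (\<Prod>i\<in>UNIV. (z$i)^\<alpha> i) = (\<Prod>i\<in>UNIV. norm (z$i)^\<alpha> i)"
    by (simp add: prod_norm[symmetric] norm_power)
  also have "\<dots> \<le> (\<Prod>i\<in>UNIV. norm z^\<alpha> i)"
    by (intro prod_mono conjI power_mono) (auto intro: Finite_Cartesian_Product.norm_nth_le)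
  also have "\<dots> = norm z ^ sum \<alpha> UNIV" by (simp add: power_sum)
  also have "\<dots> \<le> norm z ^ e" by (rule power_increasing[OF assms(2,1)])
  finally show ?thesis .
qed

lemma mono_scale:
  fixes z :: "complex^'n"
  shows "(\<Prod>i\<in>UNIV. ((r *s z)$i)^\<alpha> i) = r ^ sum \<alpha> UNIV * (\<Prod>i\<in>UNIV. (z$i)^\<alpha> i)"
  by (simp add: power_mult_distrib prod.distrib power_sum)

lemma total_degree_ge:
  assumes "finite {\<alpha>. c \<alpha> \<noteq> 0}" "c \<alpha> \<noteq> 0"
  shows "sum \<alpha> UNIV \<le> total_degree c"
proof -
  have "{sum \<alpha> UNIV | \<alpha>. c \<alpha> \<noteq> 0} = (\<lambda>\<alpha>. sum \<alpha> UNIV) ` {\<alpha>. c \<alpha> \<noteq> 0}" by auto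
  then have fin: "finite ({sum \<alpha> UNIV | \<alpha>. c \<alpha> \<noteq> 0} \<union> {0})" using assms(1) by simp
  show ?thesis unfolding total_degree_def by (rule Max_ge[OF fin]) (use assms(2) in auto)
qed

lemma total_degree_attained:
  assumes "finite {\<alpha>. c \<alpha> \<noteq> 0}" "total_degree c > 0"
  shows "\<exists>\<alpha>. c \<alpha> \<noteq> 0 \<and> sum \<alpha> UNIV = total_degree c"
proof -
  have "{sum \<alpha> UNIV | \<alpha>. c \<alpha> \<noteq> 0} = (\<lambda>\<alpha>. sum \<alpha> UNIV) ` {\<alpha>. c \<alpha> \<noteq> 0}" by auto
  then have fin: "finite ({sum \<alpha> UNIV | \<alpha>. c \<alpha> \<noteq> 0} \<union> {0})" using assms(1) by simp
  have "total_degree c \<in> {sum \<alpha> UNIV | \<alpha>. c \<alpha> \<noteq> 0} \<union> {0}"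
    unfolding total_degree_def by (rule Max_in[OF fin]) auto
  then show ?thesis using assms(2) by auto
qed

lemma poly_upper:
  fixes c :: "('n::finite \<Rightarrow> nat) \<Rightarrow> complex" and z :: "complex^'n"
  assumes "finite {\<alpha>. c \<alpha> \<noteq> 0}" "1 \<le> norm z"
  shows "norm (mpoly_fun c z) \<le> (\<Sum>\<alpha>\<in>{\<alpha>. c \<alpha> \<noteq> 0}. norm (c \<alpha>)) * norm z ^ total_degree c"
proof -
  have "norm (mpoly_fun c z) \<le> (\<Sum>\<alpha>\<in>{\<alpha>. c \<alpha> \<noteq> 0}. norm (c \<alpha> * (\<Prod>i\<in>UNIV. (z $ i) ^ \<alpha> i)))"
    unfolding mpoly_fun_def by (rule norm_sum)
  also have "\<dots> \<le> (\<Sum>\<alpha>\<in>{\<alpha>. c \<alpha> \<noteq> 0}. norm (c \<alpha>) * norm z ^ total_degree c)"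
    unfolding norm_mult
    by (intro sum_mono mult_left_mono mono_norm_le assms(2) total_degree_ge[OF assms(1)]) auto
  finally show ?thesis by (simp add: sum_distrib_right)
qed

lemma poly_rest:
  fixes c :: "('n::finite \<Rightarrow> nat) \<Rightarrow> complex" and z :: "complex^'n"
  assumes "finite {\<alpha>. c \<alpha> \<noteq> 0}" "1 \<le> norm z"
  shows "norm (mpoly_fun c z - (\<Sum>\<alpha>\<in>{\<alpha>. c \<alpha> \<noteq> 0 \<and> sum \<alpha> UNIV = total_degree c}. c \<alpha> * (\<Prod>i\<in>UNIV. (z $ i) ^ \<alpha> i)))
     \<le> (\<Sum>\<alpha>\<in>{\<alpha>. c \<alpha> \<noteq> 0}. norm (c \<alpha>)) * norm z ^ (total_degree c - 1)"
proof -
  let ?A = "{\<alpha>. c \<alpha> \<noteq> 0}" and ?Ad = "{\<alpha>. c \<alpha> \<noteq> 0 \<and> sum \<alpha> UNIV = total_degree c}"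
  let ?f = "\<lambda>\<alpha>. c \<alpha> * (\<Prod>i\<in>UNIV. (z $ i) ^ \<alpha> i)"
  have sub: "?Ad \<subseteq> ?A" by auto
  have "mpoly_fun c z = sum ?f (?A - ?Ad) + sum ?f ?Ad"
    unfolding mpoly_fun_def by (rule sum.subset_diff[OF sub assms(1)])
  then have "norm (mpoly_fun c z - sum ?f ?Ad) = norm (sum ?f (?A - ?Ad))" by simp
  also have "\<dots> \<le> (\<Sum>\<alpha>\<in>?A - ?Ad. norm (?f \<alpha>))" by (rule norm_sum)
  also have "\<dots> \<le> (\<Sum>\<alpha>\<in>?A - ?Ad. norm (c \<alpha>) * norm z ^ (total_degree c - 1))"
  proof (intro sum_mono)
    fix \<alpha> assume a: "\<alpha> \<in> ?A - ?Ad"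
    then have "sum \<alpha> UNIV \<le> total_degree c" using total_degree_ge[OF assms(1)] by auto
    with a have "sum \<alpha> UNIV \<le> total_degree c - 1" by auto
    then show "norm (?f \<alpha>) \<le> norm (c \<alpha>) * norm z ^ (total_degree c - 1)"
      unfolding norm_mult by (intro mult_left_mono mono_norm_le assms(2)) auto
  qed
  also have "\<dots> \<le> (\<Sum>\<alpha>\<in>?A. norm (c \<alpha>) * norm z ^ (total_degree c - 1))"
    by (rule sum_mono2[OF assms(1)]) auto
  finally show ?thesis by (simp add: sum_distrib_right)
qed




lemma l1: "((2::real)^k) powr (-q) = (2 powr (-q))^k"
proof -
  have "((2::real)^k) powr (-q) = (2 powr real k) powr (-q)" by (simp add: powr_realpow)
  also have "\<dots> = 2 powr (real k * -q)" by (rule powr_powr)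
  also have "\<dots> = (2 powr (-q)) powr real k" by (simp add: powr_powr mult.commute)
  also have "\<dots> = (2 powr (-q))^k" by (simp add: powr_realpow)
  finally show ?thesis .
qed


lemma l2: "(2 powr (-q))^k * ((2::real)^N)^k = (2 powr (N - q))^k"
proof -
  have "(2::real)^N = 2 powr real N" by (simp add: powr_realpow)
  then have "(2 powr (-q)) * ((2::real)^N) = 2 powr (N - q)" by (simp add: powr_add[symmetric])
  then show ?thesis by (simp add: power_mult_distrib[symmetric])
qed


lemma l3: "(x::real) > 0 \<Longrightarrow> (C0 * x ^ d)\<^sup>2 * x powr (-2 * s) = C0^2 * x powr (2 * real d - 2 * s)"
proof -
  assume x: "x > 0"
  have "x powr (2 * real d) = x ^ (d * 2)" using powr_realpow[OF x, of "d*2"] by (simp add: mult.commute)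
  also have "\<dots> = (x^d)^2" by (rule power_mult)
  finally have e: "(C0 * x ^ d)\<^sup>2 = C0^2 * x powr (2 * real d)" by (simp only: power_mult_distrib)
  have "x powr (2 * real d - 2 * s) = x powr (2 * real d) * x powr (-2 * s)"
    by (simp add: powr_add[symmetric])
  then show ?thesis by (simp only: e mult.assoc)
qed

lemma two_pow_bracket:
  fixes x :: real assumes "1 \<le> x"
  shows "\<exists>j::nat. 2^j \<le> x \<and> x < 2^(j+1)"
proof -
  define k where "k = \<lfloor>log 2 x\<rfloor>"
  have "2 powr k \<le> x \<and> x < 2 powr (k + 1)"
    using floor_log_eq_powr_iff[of x 2 k] assms k_def by auto
  moreover have "k \<ge> 0" unfolding k_def using assms by simp
  ultimately have "2 powr real (nat k) \<le> x \<and> x < 2 powr (real (nat k) + 1)" by simp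
  then have "2 ^ nat k \<le> x \<and> x < 2 ^ (nat k + 1)"
    using powr_realpow[of 2 "nat k"] powr_realpow[of 2 "nat k + 1"] by (auto simp: add.commute)
  then show ?thesis by blast
qed

lemma ball_measurable[measurable]: "ball (a::'a::euclidean_space) r \<in> sets lborel"
  by simp

lemma part2_core:
  fixes c :: "('n::finite \<Rightarrow> nat) \<Rightarrow> complex" and W :: "complex^'n \<Rightarrow> ennreal"
  assumes fin: "finite {\<alpha>. c \<alpha> \<noteq> 0}" and s: "real (total_degree c) + real CARD('n) < s"
    and R: "\<forall>z. R \<le> norm z \<longrightarrow> W z \<le> ennreal (norm z powr (-2 * s))"
  shows "\<exists>K. compact K \<and> (\<integral>\<^sup>+ z\<in>(UNIV - K). ennreal ((norm (mpoly_fun c z))\<^sup>2) * W z \<partial>lborel) < \<infinity>"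
proof -
  define d where "d = total_degree c"
  define C0 where "C0 = (\<Sum>\<alpha>\<in>{\<alpha>. c \<alpha> \<noteq> 0}. norm (c \<alpha>))"
  define q where "q = 2 * s - 2*d"
  define N where "N = DIM(complex^'n)"
  have N: "N = 2 * CARD('n)" by (simp add: N_def)
  have C0: "C0 \<ge> 0" unfolding C0_def by (simp add: sum_nonneg)
  have q: "q > N" using s unfolding q_def N d_def by simp
  have spos: "s > 0" proof - have "real CARD('n) > 0" by simp then show ?thesis using s by linarith qed
  obtain k0 :: nat where k0: "max 1 R < 2^k0" using real_arch_pow[of 2 "max 1 R"] by auto
  define K :: "(complex^'n) set" where "K = cball 0 (2^k0)"
  define S where "S k = ball (0::complex^'n) (2^(k+1)) - ball 0 (2^k)" for k :: nat
  define b where "b k = C0^2 * (2^k) powr (-q)" for k :: nat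
  define g where "g z = (\<Sum>k. ennreal (b k) * indicator (S k) z)" for z
  define V where "V = unit_ball_vol (real N)"
  have V: "V \<ge> 0" unfolding V_def by simp
  have Smeas: "S k \<in> sets lborel" for k unfolding S_def by simp
  have pw: "ennreal ((norm (mpoly_fun c z))\<^sup>2) * W z * indicator (UNIV - K) z \<le> g z" for z
  proof (cases "z \<in> K")
    case True then show ?thesis by simp
  next
    case False
    then have zb: "norm z > 2^k0" unfolding K_def by (simp add: dist_norm)
    then have z1: "norm z \<ge> 1" "norm z \<ge> R" using k0 by linarith+
    obtain j :: nat where j: "2^j \<le> norm z" "norm z < 2^(j+1)" using two_pow_bracket[OF z1(1)] by blast
    have zS: "z \<in> S j" unfolding S_def using j by (simp add: dist_norm)
    have zpos: "norm z > 0" using z1 by linarith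
    have "ennreal ((norm (mpoly_fun c z))\<^sup>2) * W z \<le> ennreal ((C0 * norm z ^ d)\<^sup>2) * ennreal (norm z powr (-2 * s))"
      apply (intro mult_mono ennreal_leI power_mono)
      using poly_upper[OF fin z1(1)] R z1(2) unfolding C0_def d_def by auto
    also have "\<dots> = ennreal (C0^2 * norm z powr (-q))"
      using l3[OF zpos, of C0 d s] by (simp add: ennreal_mult[symmetric] q_def)
    also have "\<dots> \<le> ennreal (b j)"
      unfolding b_def using q N j(1) zpos
      by (intro ennreal_leI mult_left_mono powr_mono2') auto
    also have "\<dots> = (\<Sum>k\<in>{j}. ennreal (b k) * indicator (S k) z)" using zS by simp
    also have "\<dots> \<le> g z" unfolding g_def by (rule sum_le_suminf) auto
    finally show ?thesis using False by simp
  qed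
  have "(\<integral>\<^sup>+ z\<in>(UNIV - K). ennreal ((norm (mpoly_fun c z))\<^sup>2) * W z \<partial>lborel) \<le> (\<integral>\<^sup>+ z. g z \<partial>lborel)"
    by (rule nn_integral_mono) (use pw in auto)
  also have "\<dots> = (\<Sum>k. \<integral>\<^sup>+ z. ennreal (b k) * indicator (S k) z \<partial>lborel)"
    unfolding g_def by (rule nn_integral_suminf) (use Smeas in measurable)
  also have "\<dots> = (\<Sum>k. ennreal (b k) * emeasure lborel (S k))"
    by (intro suminf_cong nn_integral_cmult_indicator Smeas)
  also have "\<dots> \<le> (\<Sum>k. ennreal (b k * (V * (2^(k+1))^N)))"
  proof (intro suminf_le summableI)
    fix k
    have "emeasure lborel (S k) \<le> emeasure lborel (ball (0::complex^'n) (2^(k+1)))"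
      unfolding S_def by (intro emeasure_mono) auto
    also have "\<dots> = ennreal (V * (2^(k+1))^N)" unfolding V_def N_def by (rule emeasure_ball) simp
    finally show "ennreal (b k) * emeasure lborel (S k) \<le> ennreal (b k * (V * (2^(k+1))^N))"
      using V by (simp add: ennreal_mult b_def C0 mult_left_mono)
  qed
  also have "\<dots> < \<infinity>"
  proof -
    define r where "r = 2 powr (N - q)"
    have r: "r < 1" "r \<ge> 0" unfolding r_def using q by (auto intro: powr_less_one)
    have eq: "b k * (V * (2^(k+1))^N) = (C0^2 * V * 2^N) * r^k" for k
    proof -
      have "((2::real)^k) powr (-q) = (2 powr (-q))^k" by (rule l1)
      moreover have "((2::real)^(k+1))^N = 2^N * (2^N)^k"
        by (simp only: power_add power_one_right power_mult_distrib mult.commute power_mult[symmetric])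
      moreover have "(2 powr (-q))^k * (2^N)^k = r^k"
        unfolding r_def by (rule l2)
      ultimately show ?thesis unfolding b_def by (simp add: algebra_simps)
    qed
    have "summable (\<lambda>k. b k * (V * (2^(k+1))^N))"
      unfolding eq by (intro summable_mult summable_geometric) (use r in auto)
    moreover have "\<And>k. b k * (V * (2^(k+1))^N) \<ge> 0" unfolding b_def using V by simp
    ultimately show ?thesis using ennreal_suminf_neq_top by (simp add: top.not_eq_extremum)
  qed
  finally have "(\<integral>\<^sup>+ z\<in>(UNIV - K). ennreal ((norm (mpoly_fun c z))\<^sup>2) * W z \<partial>lborel) < \<infinity>" .
  moreover have "compact K" unfolding K_def by simp
  ultimately show ?thesis by blast
qed



lemma vec_scaleR_nth: "((r::real) *\<^sub>R (z::complex^'n)) $ i = complex_of_real r * z $ i"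
  by (subst vector_scaleR_component) (rule scaleR_conv_of_real)

lemma mono_scaleR:
  fixes z :: "complex^'n"
  shows "(\<Prod>i\<in>UNIV. ((r *\<^sub>R z)$i)^\<alpha> i) = complex_of_real r ^ sum \<alpha> UNIV * (\<Prod>i\<in>UNIV. (z$i)^\<alpha> i)"
  by (simp only: vec_scaleR_nth power_mult_distrib prod.distrib power_sum)

definition topP :: "(('n::finite \<Rightarrow> nat) \<Rightarrow> complex) \<Rightarrow> complex^'n \<Rightarrow> complex" where
  "topP c z = (\<Sum>\<alpha>\<in>{\<alpha>. c \<alpha> \<noteq> 0 \<and> sum \<alpha> UNIV = total_degree c}. c \<alpha> * (\<Prod>i\<in>UNIV. (z $ i) ^ \<alpha> i))"

lemma topP_scale: "topP c (r *\<^sub>R z) = complex_of_real r ^ total_degree c * topP c z"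
  unfolding topP_def mono_scaleR sum_distrib_left
  by (intro sum.cong refl) (auto simp: mult_ac)

lemma topP_cont: "continuous_on UNIV (topP c)"
  unfolding topP_def by (intro continuous_intros)

lemma topP_nonzero:
  assumes fin: "finite {\<alpha>. c \<alpha> \<noteq> 0}" and d: "total_degree c > 0"
  shows "\<exists>\<omega>. topP c \<omega> \<noteq> 0"
proof (rule ccontr)
  assume "\<not> (\<exists>\<omega>. topP c \<omega> \<noteq> 0)"
  then have all: "\<forall>z. topP c z = 0" by simp
  obtain \<alpha>0 where a0: "c \<alpha>0 \<noteq> 0" "sum \<alpha>0 UNIV = total_degree c"
    using total_degree_attained[OF fin d] by blast
  let ?Ad = "{\<alpha>. c \<alpha> \<noteq> 0 \<and> sum \<alpha> UNIV = total_degree c}"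
  have finAd: "finite ?Ad" by (rule finite_subset[OF _ fin]) auto
  have "(\<Sum>\<alpha>\<in>{\<alpha>\<in>?Ad. \<forall>i\<in>UNIV. \<alpha> i = \<alpha>0 i}. c \<alpha>) = 0"
    by (rule poly_fiber_zero[OF _ finAd]) ( simp, use all in \<open>simp add: topP_def\<close>)
  moreover have "{\<alpha>\<in>?Ad. \<forall>i\<in>UNIV. \<alpha> i = \<alpha>0 i} = {\<alpha>0}" using a0 by auto
  ultimately show False using a0 by simp
qed

lemma topP_zero:
  assumes "total_degree c > 0"
  shows "topP c 0 = 0"
  unfolding topP_def
proof (intro sum.neutral ballI)
  fix \<alpha> assume a: "\<alpha> \<in> {\<alpha>. c \<alpha> \<noteq> 0 \<and> sum \<alpha> UNIV = total_degree c}"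
  then obtain i where "\<alpha> i \<noteq> 0" using assms by (metis (mono_tags, lifting) mem_Collect_eq sum.neutral less_irrefl)
  then have "(\<Prod>i\<in>UNIV. ((0::complex^'a) $ i) ^ \<alpha> i) = 0"
    by (intro prod_zero) auto
  then show "c \<alpha> * (\<Prod>i\<in>UNIV. ((0::complex^'a) $ i) ^ \<alpha> i) = 0" by simp
qed



lemma grow_eq:
  fixes t m V \<delta> s :: real
  assumes t: "t > 0"
  shows "(t^d * m / 2)^2 * (2*t) powr (-2 * s) * (V * (t*\<delta>)^N)
       = ((m/2)^2 * 2 powr (-2 * s) * V * \<delta>^N) * (t^(2*d+N) * t powr (-2 * s))"
proof -
  have e1: "(2*t) powr (-2 * s) = 2 powr (-2 * s) * t powr (-2 * s)" using t by (simp add: powr_mult)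
  have e2: "(t^d * m / 2)^2 = t^(2*d) * (m/2)^2"
  proof -
    have "(t^d * m / 2)^2 = (t^d * (m/2))^2" by simp
    also have "\<dots> = (t^d)^2 * (m/2)^2" by (rule power_mult_distrib)
    also have "(t^d)^2 = t^(2*d)" by (simp add: power_mult[symmetric] mult.commute)
    finally show ?thesis .
  qed
  have e3: "(t*\<delta>)^N = t^N * \<delta>^N" by (rule power_mult_distrib)
  have e4: "t^(2*d+N) = t^(2*d) * t^N" by (rule power_add)
  show ?thesis unfolding e1 e2 e3 e4 by (simp only: mult_ac)
qed

lemma grow_ge:
  fixes t s :: real
  assumes t: "t \<ge> 1" and e: "2 * s \<le> real (2*d+N)"
  shows "1 \<le> t^(2*d+N) * t powr (-2 * s)"
proof -
  have "t^(2*d+N) = t powr real (2*d+N)" using t powr_realpow[of t "2*d+N"] by simp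
  then have "t^(2*d+N) * t powr (-2 * s) = t powr (real (2*d+N) - 2 * s)"
    by (simp add: powr_add[symmetric])
  also have "\<dots> \<ge> 1" by (rule ge_one_powr_ge_zero) (use t e in auto)
  finally show ?thesis by simp
qed

lemma not_summable_const:
  assumes "(c::real) > 0" shows "\<not> summable (\<lambda>_::nat. c)"
proof
  assume "summable (\<lambda>_::nat. c)"
  then have "(\<lambda>_::nat. c) \<longlonglongrightarrow> 0" by (rule summable_LIMSEQ_zero)
  then have "c = 0" using LIMSEQ_unique[OF tendsto_const] by blast
  then show False using assms by simp
qed

lemma part1_core:
  fixes c :: "('n::finite \<Rightarrow> nat) \<Rightarrow> complex" and W :: "complex^'n \<Rightarrow> ennreal" and K :: "(complex^'n) set"
  assumes fin: "finite {\<alpha>. c \<alpha> \<noteq> 0}" and dpos: "total_degree c > 0"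
    and s: "0 < s" "s \<le> real (total_degree c) + real CARD('n)"
    and R: "\<forall>z. R \<le> norm z \<longrightarrow> ennreal (norm z powr (-2 * s)) \<le> W z"
    and K: "compact K"
  shows "(\<integral>\<^sup>+ z\<in>(UNIV - K). ennreal ((norm (mpoly_fun c z))\<^sup>2) * W z \<partial>lborel) = \<infinity>"
proof -
  define d where "d = total_degree c"
  have d1: "d \<ge> 1" using dpos by (simp add: d_def)
  define C0 where "C0 = (\<Sum>\<alpha>\<in>{\<alpha>. c \<alpha> \<noteq> 0}. norm (c \<alpha>))"
  define N where "N = DIM(complex^'n)"
  have N: "N = 2 * CARD('n)" by (simp add: N_def)
  have C0: "C0 \<ge> 0" unfolding C0_def by (simp add: sum_nonneg)
  obtain \<omega> where om: "topP c \<omega> \<noteq> 0" using topP_nonzero[OF fin dpos] by blast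
  have om0: "\<omega> \<noteq> 0" using om topP_zero[OF dpos] by auto
  define \<omega>' where "\<omega>' = (3 / (2 * norm \<omega>)) *\<^sub>R \<omega>"
  have nom': "norm \<omega>' = 3/2" using om0 by (simp add: \<omega>'_def)
  have om': "topP c \<omega>' \<noteq> 0" using om om0 by (simp add: \<omega>'_def topP_scale)
  define m where "m = norm (topP c \<omega>') / 2"
  have m: "m > 0" using om' by (simp add: m_def)
  obtain \<delta> where \<delta>: "\<delta> > 0" "\<forall>y. dist y \<omega>' < \<delta> \<longrightarrow> dist (topP c y) (topP c \<omega>') < m"
    using topP_cont[of c] m unfolding continuous_on_iff by (metis UNIV_I)
  define \<delta>' where "\<delta>' = min \<delta> (1/2)"
  have \<delta>': "\<delta>' > 0" "\<delta>' \<le> \<delta>" "\<delta>' \<le> 1/2" using \<delta> by (auto simp: \<delta>'_def)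
  define t1 where "t1 = max 1 (C0 * 2^d / m)"
  have key: "t < norm z \<and> norm z < 2*t \<and> t^d * m / 2 \<le> norm (mpoly_fun c z)"
    if t: "t \<ge> t1" and z: "z \<in> ball (t *\<^sub>R \<omega>') (t * \<delta>')" for t z
  proof -
    have t1: "t \<ge> 1" and tC: "t \<ge> C0 * 2^d / m" using t by (auto simp: t1_def)
    define y where "y = (1/t) *\<^sub>R z"
    have zy: "z = t *\<^sub>R y" using t1 by (simp add: y_def)
    have "t * norm (y - \<omega>') = norm (t *\<^sub>R y - t *\<^sub>R \<omega>')"
      using t1 by (simp add: scaleR_diff_right[symmetric])
    also have "\<dots> < t * \<delta>'" using z zy by (simp add: dist_norm norm_minus_commute)
    finally have yd: "norm (y - \<omega>') < \<delta>'" using t1 by simp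
    have "\<bar>norm y - norm \<omega>'\<bar> \<le> norm (y - \<omega>')" by (rule norm_triangle_ineq3)
    then have ny: "1 < norm y" "norm y < 2" using yd nom' \<delta>' by linarith+
    have nz: "norm z = t * norm y" using zy t1 by simp
    have nz1: "t < norm z" "norm z < 2 * t" using nz ny t1 by auto
    have "dist (topP c y) (topP c \<omega>') < m" using \<delta>(2) yd \<delta>' by (simp add: dist_norm)
    then have tpy: "norm (topP c y) \<ge> m"
      using norm_triangle_ineq2[of "topP c \<omega>'" "topP c y"] m_def by (simp add: dist_norm norm_minus_commute)
    have "norm (topP c z) = t^d * norm (topP c y)"
      using t1 by (simp add: zy topP_scale norm_mult norm_power d_def)
    then have tpz: "norm (topP c z) \<ge> t^d * m" using tpy t1 by (simp add: mult_left_mono)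
    have "norm (mpoly_fun c z - topP c z) \<le> C0 * norm z ^ (d - 1)"
      using poly_rest[OF fin, of z] nz1 t1 unfolding topP_def C0_def d_def by simp
    also have "\<dots> \<le> C0 * (2 * t) ^ (d - 1)"
      using nz1 C0 by (intro mult_left_mono power_mono) auto
    also have "\<dots> = (C0 * 2^(d-1)) * t^(d-1)" by (simp add: power_mult_distrib)
    also have "\<dots> \<le> (t * m / 2) * t^(d-1)"
    proof (intro mult_right_mono)
      have "C0 * 2^d \<le> t * m" using tC m by (simp add: field_simps)
      moreover have "(2::real)^d = 2 * 2^(d-1)" using d1 by (metis power_eq_if not_one_le_zero)
      ultimately show "C0 * 2^(d-1) \<le> t * m / 2" by simp
    qed (use t1 in simp)
    also have "\<dots> = t^d * m / 2" using d1 by (simp add: power_eq_if)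
    finally have "norm (mpoly_fun c z - topP c z) \<le> t^d * m / 2" .
    then have "t^d * m / 2 \<le> norm (mpoly_fun c z)"
      using tpz norm_triangle_ineq2[of "topP c z" "mpoly_fun c z"] by (simp add: norm_minus_commute)
    then show ?thesis using nz1 by simp
  qed
  obtain RK where RK: "\<forall>y\<in>K. dist 0 y \<le> RK"
    using compact_imp_bounded[OF K] bounded_any_center by blast
  obtain k1 :: nat where k1: "max t1 (max RK R) < 2^k1" using real_arch_pow[of 2 "max t1 (max RK R)"] by auto
  define tt where "tt j = (2::real)^(j+k1)" for j
  have tt: "tt j \<ge> 2^k1" for j unfolding tt_def by (rule power_increasing) auto
  have tt1: "tt j > t1" "tt j > RK" "tt j > R" "tt j \<ge> 1" for j using tt[of j] k1 by (auto simp: t1_def)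
  define T where "T j = ball (tt j *\<^sub>R \<omega>') (tt j * \<delta>')" for j
  define a where "a t = (t^d * m / 2)^2 * (2*t) powr (-2 * s)" for t :: real
  define V where "V = unit_ball_vol (real N)"
  have V: "V > 0" unfolding V_def by simp
  have Tj: "tt j < norm z \<and> norm z < 2 * tt j \<and> tt j^d * m / 2 \<le> norm (mpoly_fun c z)" if "z \<in> T j" for z j
    using key[of "tt j" z] that tt1[of j] unfolding T_def by auto
  have disj: "j = j'" if "z \<in> T j" "z \<in> T j'" for z j j'
  proof (rule ccontr)
    assume ne: "j \<noteq> j'"
    have "2 * tt j \<le> tt j'" if "j < j'" for j j'
    proof -
      have "2 * tt j = 2^(Suc j + k1)" unfolding tt_def by simp
      also have "\<dots> \<le> 2^(j' + k1)" by (rule power_increasing) (use that in auto)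
      finally show ?thesis unfolding tt_def .
    qed
    have a1: "tt j < norm z" "norm z < 2 * tt j" using Tj[OF that(1)] by auto
    have a2: "tt j' < norm z" "norm z < 2 * tt j'" using Tj[OF that(2)] by auto
    show False
    proof (cases "j < j'")
      case True
      then show False using \<open>\<And>j j'. j < j' \<Longrightarrow> 2 * tt j \<le> tt j'\<close>[OF True] a1 a2 by linarith
    next
      case False
      then have "j' < j" using ne by simp
      then show False using \<open>\<And>j j'. j < j' \<Longrightarrow> 2 * tt j \<le> tt j'\<close>[OF \<open>j' < j\<close>] a1 a2 by linarith
    qed
  qed
  have fb: "ennreal (a (tt j)) \<le> ennreal ((norm (mpoly_fun c z))\<^sup>2) * W z * indicator (UNIV - K) z"
    if z: "z \<in> T j" for z j
  proof -
    have tj: "tt j < norm z" "norm z < 2 * tt j" "tt j^d * m / 2 \<le> norm (mpoly_fun c z)" using Tj[OF z] by auto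
    have "z \<notin> K" using RK tj(1) tt1[of j] by (auto simp: dist_norm)
    have zR: "R \<le> norm z" using tj(1) tt1[of j] by simp
    have "(2 * tt j) powr (-2 * s) \<le> norm z powr (-2 * s)"
      by (rule powr_mono2') (use s tj tt1[of j] in auto)
    then have w: "ennreal ((2 * tt j) powr (-2 * s)) \<le> W z"
      using R zR by (meson ennreal_leI order.trans)
    have p: "ennreal ((tt j^d * m / 2)^2) \<le> ennreal ((norm (mpoly_fun c z))\<^sup>2)"
      by (intro ennreal_leI power_mono tj(3)) (use m tt1[of j] in auto)
    have "ennreal (a (tt j)) = ennreal ((tt j^d * m / 2)^2) * ennreal ((2 * tt j) powr (-2 * s))"
      unfolding a_def by (rule ennreal_mult) auto
    also have "\<dots> \<le> ennreal ((norm (mpoly_fun c z))\<^sup>2) * W z" by (intro mult_mono p w) auto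
    finally show ?thesis using \<open>z \<notin> K\<close> by simp
  qed
  define g where "g z = (\<Sum>j. ennreal (a (tt j)) * indicator (T j) z)" for z
  have gle: "g z \<le> ennreal ((norm (mpoly_fun c z))\<^sup>2) * W z * indicator (UNIV - K) z" for z
  proof (cases "\<exists>j. z \<in> T j")
    case True
    then obtain j where j: "z \<in> T j" by blast
    have "g z = (\<Sum>i\<in>{j}. ennreal (a (tt i)) * indicator (T i) z)"
    proof (unfold g_def, rule suminf_finite)
      fix i assume "i \<notin> {j}"
      then have "z \<notin> T i" using disj j by blast
      then show "ennreal (a (tt i)) * indicator (T i) z = 0" by simp
    qed simp
    also have "\<dots> = ennreal (a (tt j))" using j by simp
    finally show ?thesis using fb[OF j] by simp
  next
    case False
    then have "g z = 0" unfolding g_def by simp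
    then show ?thesis by simp
  qed
  have Tmeas: "T j \<in> sets lborel" for j unfolding T_def by simp
  define c2 where "c2 = (m/2)^2 * 2 powr (-2 * s) * V * \<delta>'^N"
  have c2: "c2 > 0" unfolding c2_def using m V \<delta>' by simp
  have "(\<integral>\<^sup>+ z. g z \<partial>lborel) = (\<Sum>j. \<integral>\<^sup>+ z. ennreal (a (tt j)) * indicator (T j) z \<partial>lborel)"
    unfolding g_def by (rule nn_integral_suminf) (use Tmeas in measurable)
  also have "\<dots> = (\<Sum>j. ennreal (a (tt j)) * emeasure lborel (T j))"
    by (intro suminf_cong nn_integral_cmult_indicator Tmeas)
  also have "\<dots> = (\<Sum>j. ennreal (a (tt j) * (V * (tt j * \<delta>')^N)))"
  proof (intro suminf_cong)
    fix j
    have "emeasure lborel (T j) = ennreal (V * (tt j * \<delta>')^N)"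
      unfolding T_def V_def N_def by (rule emeasure_ball) (use tt1[of j] \<delta>' in simp)
    then show "ennreal (a (tt j)) * emeasure lborel (T j) = ennreal (a (tt j) * (V * (tt j * \<delta>')^N))"
      using V tt1[of j] \<delta>' by (simp add: ennreal_mult a_def)
  qed
  finally have I1: "(\<integral>\<^sup>+ z. g z \<partial>lborel) = (\<Sum>j. ennreal (a (tt j) * (V * (tt j * \<delta>')^N)))" .
  have I2: "(\<Sum>j. ennreal c2) \<le> (\<Sum>j. ennreal (a (tt j) * (V * (tt j * \<delta>')^N)))"
  proof (intro suminf_le summableI ennreal_leI)
    fix j
    have "a (tt j) * (V * (tt j * \<delta>')^N) = c2 * (tt j^(2*d+N) * tt j powr (-2 * s))"
      unfolding a_def c2_def by (rule grow_eq) (use tt1[of j] in simp)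
    moreover have "1 \<le> tt j^(2*d+N) * tt j powr (-2 * s)"
      by (rule grow_ge) (use tt1[of j] s N d_def in auto)
    ultimately show "c2 \<le> a (tt j) * (V * (tt j * \<delta>')^N)" using c2
      by (metis mult.right_neutral mult_left_mono less_eq_real_def)
  qed
  have I3': "(\<Sum>j. ennreal c2) = top"
    by (rule summable_iff_suminf_neq_top) (use c2 not_summable_const[OF c2] in auto)
  have "top \<le> (\<Sum>j. ennreal (a (tt j) * (V * (tt j * \<delta>')^N)))" using I2 unfolding I3' .
  then have I4: "(\<integral>\<^sup>+ z. g z \<partial>lborel) = top" unfolding I1 by (simp only: top_unique)
  have I5: "(\<integral>\<^sup>+ z. g z \<partial>lborel) \<le> (\<integral>\<^sup>+ z\<in>(UNIV - K). ennreal ((norm (mpoly_fun c z))\<^sup>2) * W z \<partial>lborel)"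
    by (rule nn_integral_mono) (use gle in auto)
  then have "top \<le> (\<integral>\<^sup>+ z\<in>(UNIV - K). ennreal ((norm (mpoly_fun c z))\<^sup>2) * W z \<partial>lborel)"
    unfolding I4 .
  then show ?thesis unfolding infinity_ennreal_def by (simp only: top_unique)
qed



lemma ediv_lt:
  assumes "x / ereal r < ereal s" "r > 0"
  shows "x < ereal (s * r)"
  using assms by (cases x) (auto simp: field_simps)

lemma ediv_gt:
  assumes "ereal s < x / ereal r" "r > 0" "x \<noteq> \<infinity>"
  shows "\<exists>v. x = ereal v \<and> s * r < v"
  using assms by (cases x) (auto simp: field_simps)

lemma weight_lower:
  assumes "x < ereal (s * ln t)" "t > 0"
  shows "ennreal (t powr (-2 * s)) \<le> exp_weight 2 (\<lambda>_. x) z"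
proof (cases x)
  case (real v)
  then have "v < s * ln t" using assms by simp
  then have "t powr (-2 * s) \<le> exp (- 2 * v)" using assms(2) by (simp add: powr_def)
  then show ?thesis using real by (simp add: exp_weight_def ennreal_leI)
qed (use assms in \<open>auto simp: exp_weight_def\<close>)

lemma weight_upper:
  assumes "s * ln t < v" "t > 0"
  shows "exp_weight 2 (\<lambda>_. ereal v) z \<le> ennreal (t powr (-2 * s))"
proof -
  have "exp (- 2 * v) \<le> t powr (-2 * s)" using assms by (simp add: powr_def)
  then show ?thesis by (simp add: exp_weight_def ennreal_leI)
qed

lemma exp_weight_pt: "exp_weight t u z = exp_weight t (\<lambda>_. u z) z"
  by (simp add: exp_weight_def)

theorem proposition8p2:
  fixes u :: "complex^'n \<Rightarrow> ereal"
  assumes "LPSH u" and "sigma_inf u > ereal (real CARD('n))"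
  shows "(\<forall>c. finite {\<alpha>. c \<alpha> \<noteq> 0} \<and> mpoly_fun c \<in> P_inf u \<longrightarrow>
            ereal (real (total_degree c)) \<le> sigma_inf u - ereal (real CARD('n))) \<and>
         (L_inf u > ereal (real CARD('n)) \<and> (\<forall>\<zeta>. lct u \<zeta> > 1) \<longrightarrow>
          (\<forall>c. finite {\<alpha>. c \<alpha> \<noteq> 0} \<and> ereal (real (total_degree c)) < L_inf u - ereal (real CARD('n))
               \<longrightarrow> mpoly_fun c \<in> P_inf u))"
proof (intro conjI allI impI; elim conjE)
  have psh: "psh u" and sfin: "\<bar>sigma_inf u\<bar> \<noteq> \<infinity>" using assms(1) by (auto simp: LPSH_def)
  have noinf: "u z \<noteq> \<infinity>" for z using psh by (simp add: psh_def)
  {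
    fix c :: "('n \<Rightarrow> nat) \<Rightarrow> complex"
    assume fin: "finite {\<alpha>. c \<alpha> \<noteq> 0}" and inP: "mpoly_fun c \<in> P_inf u"
    obtain \<sigma> where \<sigma>: "sigma_inf u = ereal \<sigma>" using sfin by (cases "sigma_inf u") auto
    have \<sigma>n: "\<sigma> > real CARD('n)" using assms(2) \<sigma> by simp
    show "ereal (real (total_degree c)) \<le> sigma_inf u - ereal (real CARD('n))"
    proof (rule ccontr)
      assume "\<not> ?thesis"
      then have dlt: "\<sigma> - real CARD('n) < real (total_degree c)" using \<sigma> by simp
      then have dpos: "total_degree c > 0" using \<sigma>n by simp
      define s where "s = min (real (total_degree c) + real CARD('n)) (\<sigma> + 1)"
      have s: "\<sigma> < s" "s \<le> real (total_degree c) + real CARD('n)" "0 < s"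
        using dlt \<sigma>n unfolding s_def by auto
      have "Limsup at_infinity (\<lambda>z. u z / ereal (ln (norm z))) < ereal s"
        using s(1) \<sigma> unfolding sigma_inf_def by simp
      then have "eventually (\<lambda>z. u z / ereal (ln (norm z)) < ereal s) at_infinity"
        by (rule Limsup_lessD)
      then obtain R0 where R0: "\<And>z. norm z \<ge> R0 \<Longrightarrow> u z / ereal (ln (norm z)) < ereal s"
        unfolding eventually_at_infinity by blast
      define R where "R = max R0 2"
      have W: "\<forall>z. R \<le> norm z \<longrightarrow> ennreal (norm z powr (-2 * s)) \<le> exp_weight 2 u z"
      proof (intro allI impI)
        fix z :: "complex^'n" assume z: "R \<le> norm z"
        have ln: "ln (norm z) > 0" using z by (intro ln_gt_zero) (simp add: R_def)
        have "u z < ereal (s * ln (norm z))" using ediv_lt[OF R0 ln] z by (simp add: R_def)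
        moreover have nz: "norm z > 0" using z unfolding R_def by auto
        ultimately show "ennreal (norm z powr (-2 * s)) \<le> exp_weight 2 u z"
          using weight_lower[of "u z" s "norm z" z] exp_weight_pt[of 2 u z] by simp
      qed
      obtain K where K: "compact K"
        "(\<integral>\<^sup>+ z\<in>(UNIV - K). ennreal ((norm (mpoly_fun c z))\<^sup>2) * exp_weight 2 u z \<partial>lborel) < \<infinity>"
        using inP unfolding P_inf_def by blast
      have "(\<integral>\<^sup>+ z\<in>(UNIV - K). ennreal ((norm (mpoly_fun c z))\<^sup>2) * exp_weight 2 u z \<partial>lborel) = \<infinity>"
        by (rule part1_core[OF fin dpos s(3) s(2) W K(1)])
      then show False using K(2) by simp
    qed
  }
  {
    fix c :: "('n \<Rightarrow> nat) \<Rightarrow> complex"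
    assume Ln: "L_inf u > ereal (real CARD('n))" and fin: "finite {\<alpha>. c \<alpha> \<noteq> 0}"
      and dL: "ereal (real (total_degree c)) < L_inf u - ereal (real CARD('n))"
    have "ereal (real (total_degree c) + real CARD('n)) < L_inf u"
      using dL Ln by (cases "L_inf u") auto
    then obtain s where s: "real (total_degree c) + real CARD('n) < s" "ereal s < L_inf u"
      using ereal_dense2 by (metis less_ereal.simps(1))
    have "ereal s < Liminf at_infinity (\<lambda>z. u z / ereal (ln (norm z)))"
      using s(2) unfolding L_inf_def by simp
    then have "eventually (\<lambda>z. ereal s < u z / ereal (ln (norm z))) at_infinity"
      by (rule less_LiminfD)
    then obtain R0 where R0: "\<And>z. norm z \<ge> R0 \<Longrightarrow> ereal s < u z / ereal (ln (norm z))"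
      unfolding eventually_at_infinity by blast
    define R where "R = max R0 2"
    have W: "\<forall>z. R \<le> norm z \<longrightarrow> exp_weight 2 u z \<le> ennreal (norm z powr (-2 * s))"
    proof (intro allI impI)
      fix z :: "complex^'n" assume z: "R \<le> norm z"
      have ln: "ln (norm z) > 0" using z by (intro ln_gt_zero) (simp add: R_def)
      obtain v where v: "u z = ereal v" "s * ln (norm z) < v"
        using ediv_gt[OF R0 ln noinf[of z]] z by (auto simp: R_def)
      have nz: "norm z > 0" using z unfolding R_def by auto
      show "exp_weight 2 u z \<le> ennreal (norm z powr (-2 * s))"
        using weight_upper[OF v(2) nz, of z] exp_weight_pt[of 2 u z] v(1) by simp
    qed
    obtain K where K: "compact K"
      "(\<integral>\<^sup>+ z\<in>(UNIV - K). ennreal ((norm (mpoly_fun c z))\<^sup>2) * exp_weight 2 u z \<partial>lborel) < \<infinity>"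
      using part2_core[OF fin s(1) W] by blast
    show "mpoly_fun c \<in> P_inf u"
      unfolding P_inf_def using fin K by blast
  }
qed


end
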